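(* Let $v,w\in\mathbb{Z}^2$ be primitive with $v\times w=1$, and let $u_1,\dots,u_n\in\mathbb{Z}^2$ be primitive normals of lines through the origin subdividing the wedge determined by $v,w$ (each $u_i$ a positive linear combination of $v$ and $w$, listed counterclockwise), such that $v\times u_1=u_i\times u_{i+1}=u_n\times w=1$ for $1\le i\le n-1$. Set $u_0=v$, $u_{n+1}=w$. Let $z\in\mathbb{C}$ and $\underline\omega\in\mathbb{C}^2$ with $\underline\omega\times u_i\notin\mathbb{R}$ for $0\le i\le n+1$. Then $$\prod_{i=0}^{n}\big(e^{2\pi iz}\,\big|\,e^{2\pi i\,\underline\omega\times u_i},e^{-2\pi i\,\underline\omega\times u_{i+1}}\big)_\infty=\big(e^{2\pi iz}\,\big|\,e^{2\pi i\,\underline\omega\times v},e^{-2\pi i\,\underline\omega\times w}\big)_\infty.$$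
   Context: For $a,b\in\mathbb{C}^2$, $a\times b=\det[a,b]=a_1b_2-a_2b_1$. q-shifted factorial: for $x\in\mathbb{C}$ and $q_j=e^{2\pi i\omega_j}$, $\omega_j\in\mathbb{C}\setminus\mathbb{R}$: if all $|q_j|<1$, $(x|q_0,q_1)_\infty=\prod_{j_0,j_1\ge0}(1-xq_0^{j_0}q_1^{j_1})$; in general (symmetric in the $q_j$), if $|q_0|>1>|q_1|$ then $(x|q_0,q_1)_\infty=(q_0^{-1}x|q_0^{-1},q_1)_\infty^{-1}$, and if both $|q_0|,|q_1|>1$ then $(x|q_0,q_1)_\infty=(q_0^{-1}q_1^{-1}x|q_0^{-1},q_1^{-1})_\infty$. *)

theory Defs
  imports Complex_Main
begin

definition icross :: "int \<times> int \<Rightarrow> int \<times> int \<Rightarrow> int" where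
  "icross a b = fst a * snd b - snd a * fst b"

definition ccross :: "complex \<times> complex \<Rightarrow> int \<times> int \<Rightarrow> complex" where
  "ccross a b = fst a * of_int (snd b) - snd a * of_int (fst b)"

definition primitive :: "int \<times> int \<Rightarrow> bool" where
  "primitive a \<longleftrightarrow> gcd (fst a) (snd a) = 1"

text \<open>The double infinite product prod over j0,j1 >= 0 of (1 - x q0^j0 q1^j1),
  taken as the limit of the square partial products (for |q0|,|q1| < 1 it converges absolutely).\<close>

definition qpoch_base :: "complex \<Rightarrow> complex \<Rightarrow> complex \<Rightarrow> complex" where
  "qpoch_base x q0 q1 =
     lim (\<lambda>N. \<Prod>p\<in>{..<N} \<times> {..<N}. 1 - x * q0 ^ fst p * q1 ^ snd p)"

definition qpoch :: "complex \<Rightarrow> complex \<Rightarrow> complex \<Rightarrow> complex" where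
  "qpoch x q0 q1 =
     (if norm q0 < 1 \<and> norm q1 < 1 then qpoch_base x q0 q1
      else if norm q0 > 1 \<and> norm q1 < 1 then inverse (qpoch_base (x / q0) (1 / q0) q1)
      else if norm q0 < 1 \<and> norm q1 > 1 then inverse (qpoch_base (x / q1) q0 (1 / q1))
      else if norm q0 > 1 \<and> norm q1 > 1 then qpoch_base (x / (q0 * q1)) (1 / q0) (1 / q1)
      else undefined)"

text \<open>(x | q0, q1)_infinity is a finite value (no pole): in the mixed cases the
  product being inverted is nonzero.\<close>

definition qpoch_finite :: "complex \<Rightarrow> complex \<Rightarrow> complex \<Rightarrow> bool" where
  "qpoch_finite x q0 q1 \<longleftrightarrow>
     (norm q0 > 1 \<and> norm q1 < 1 \<longrightarrow> qpoch_base (x / q0) (1 / q0) q1 \<noteq> 0) \<and>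
     (norm q0 < 1 \<and> norm q1 > 1 \<longrightarrow> qpoch_base (x / q1) q0 (1 / q1) \<noteq> 0)"

definition e2pi :: "complex \<Rightarrow> complex" where
  "e2pi c = exp (2 * of_real pi * \<i> * c)"

end

theory Submission
  imports Defs "HOL-Analysis.Analysis"
begin


definition bigS :: "('a \<Rightarrow> complex) \<Rightarrow> 'a set \<Rightarrow> 'a set" where
  "bigS g S = {i\<in>S. norm (g i) \<ge> 1/2}"
definition smallS :: "('a \<Rightarrow> complex) \<Rightarrow> 'a set \<Rightarrow> 'a set" where
  "smallS g S = {i\<in>S. norm (g i) < 1/2}"
definition uprodZ :: "('a \<Rightarrow> complex) \<Rightarrow> 'a set \<Rightarrow> complex" where
  "uprodZ g S = (\<Prod>i\<in>bigS g S. (1 - g i)) * exp (\<Sum>\<^sub>\<infinity>i\<in>smallS g S. Ln (1 - g i))"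

lemma finite_bigS:
  assumes "(\<lambda>i. norm (g i)) summable_on S"
  shows "finite (bigS g S)"
proof (rule ccontr)
  assume inf: "infinite (bigS g S)"
  define M where "M = (\<Sum>\<^sub>\<infinity>i\<in>S. norm (g i))"
  obtain n :: nat where n: "real n > 2 * M" using reals_Archimedean2 by blast
  obtain B where B: "finite B" "card B = n" "B \<subseteq> bigS g S"
    using infinite_arbitrarily_large[OF inf] by blast
  have "(\<Sum>i\<in>B. norm (g i)) \<le> M"
    unfolding M_def using B by (intro finite_sum_le_infsum assms) (auto simp: bigS_def)
  moreover have "(\<Sum>i\<in>B. norm (g i)) \<ge> (\<Sum>i\<in>B. 1/2)"
    using B by (intro sum_mono) (auto simp: bigS_def)
  ultimately show False using B n by simp
qed

lemma Ln_summable: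
  assumes "(\<lambda>i. norm (g i)) summable_on S"
  shows "(\<lambda>i. norm (Ln (1 - g i))) summable_on (smallS g S)"
proof (rule Infinite_Sum.abs_summable_on_comparison_test')
  show "(\<lambda>i. 2 * norm (g i)) summable_on smallS g S"
    by (intro summable_on_cmult_right summable_on_subset_banach[OF assms]) (auto simp: smallS_def)
next
  fix i assume "i \<in> smallS g S"
  then have "norm (- g i) < 1/2" by (simp add: smallS_def)
  from norm_Ln_le[OF this] show "norm (Ln (1 - g i)) \<le> 2 * norm (g i)" by simp
qed

lemma tendsto_seq_has_sum:
  assumes "(f has_sum s) S" "\<And>N. finite (F N)" "\<And>N. F N \<subseteq> S"
    and "\<And>X. finite X \<Longrightarrow> X \<subseteq> S \<Longrightarrow> eventually (\<lambda>N. X \<subseteq> F N) sequentially"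
  shows "(\<lambda>N. sum f (F N)) \<longlonglongrightarrow> s"
proof -
  have *: "filterlim F (finite_subsets_at_top S) sequentially"
    unfolding filterlim_def le_filter_def eventually_filtermap
  proof (intro allI impI)
    fix P assume "eventually P (finite_subsets_at_top S)"
    then obtain X where X: "finite X" "X \<subseteq> S" "\<forall>Y. finite Y \<and> X \<subseteq> Y \<and> Y \<subseteq> S \<longrightarrow> P Y"
      unfolding eventually_finite_subsets_at_top by blast
    show "eventually (\<lambda>N. P (F N)) sequentially"
      using assms(4)[OF X(1,2)]
    proof (rule eventually_mono)
      fix N assume "X \<subseteq> F N"
      then show "P (F N)" using X(3) assms(2,3) by blast
    qed
  qed
  show ?thesis by (rule filterlim_compose[OF assms(1)[unfolded has_sum_def] *])
qed

lemma uprodZ_lim: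
  assumes sm: "(\<lambda>i. norm (g i)) summable_on S" and fin: "\<And>N. finite (F N)" and sub: "\<And>N. F N \<subseteq> S"
    and ev: "\<And>X. finite X \<Longrightarrow> X \<subseteq> S \<Longrightarrow> eventually (\<lambda>N. X \<subseteq> F N) sequentially"
  shows "(\<lambda>N. \<Prod>i\<in>F N. (1 - g i)) \<longlonglongrightarrow> uprodZ g S"
proof -
  let ?B = "bigS g S" and ?Sm = "smallS g S"
  have fB: "finite ?B" by (rule finite_bigS[OF sm])
  have hs: "((\<lambda>i. Ln (1 - g i)) has_sum (\<Sum>\<^sub>\<infinity>i\<in>?Sm. Ln (1 - g i))) ?Sm"
    by (rule has_sum_infsum, rule Infinite_Sum.abs_summable_summable[OF Ln_summable[OF sm]])
  have lim1: "(\<lambda>N. sum (\<lambda>i. Ln (1 - g i)) (F N \<inter> ?Sm)) \<longlonglongrightarrow> (\<Sum>\<^sub>\<infinity>i\<in>?Sm. Ln (1 - g i))"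
  proof (rule tendsto_seq_has_sum[OF hs])
    fix X
    assume X: "finite X" "X \<subseteq> ?Sm"
    then have "X \<subseteq> S" by (auto simp: smallS_def)
    from ev[OF X(1) this] show "eventually (\<lambda>N. X \<subseteq> F N \<inter> ?Sm) sequentially"
      by (rule eventually_mono) (use X in auto)
  qed (use fin in auto)
  have lim2: "(\<lambda>N. (\<Prod>i\<in>?B. (1 - g i)) * exp (sum (\<lambda>i. Ln (1 - g i)) (F N \<inter> ?Sm))) \<longlonglongrightarrow> uprodZ g S"
    unfolding uprodZ_def by (intro tendsto_mult tendsto_const tendsto_exp lim1)
  have "eventually (\<lambda>N. ?B \<subseteq> F N) sequentially"
    by (rule ev[OF fB]) (auto simp: bigS_def)
  then have "eventually (\<lambda>N. (\<Prod>i\<in>?B. (1 - g i)) * exp (sum (\<lambda>i. Ln (1 - g i)) (F N \<inter> ?Sm))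
      = (\<Prod>i\<in>F N. (1 - g i))) sequentially"
  proof eventually_elim
    case (elim N)
    have eq: "F N = ?B \<union> (F N \<inter> ?Sm)" using elim sub[of N] by (auto simp: bigS_def smallS_def)
    have "exp (sum (\<lambda>i. Ln (1 - g i)) (F N \<inter> ?Sm)) = (\<Prod>i\<in>F N \<inter> ?Sm. exp (Ln (1 - g i)))"
      by (rule exp_sum) (use fin in auto)
    also have "\<dots> = (\<Prod>i\<in>F N \<inter> ?Sm. (1 - g i))"
    proof (rule prod.cong[OF refl], rule exp_Ln)
      fix i assume "i \<in> F N \<inter> ?Sm"
      then have "norm (g i) < 1/2" by (simp add: smallS_def)
      then show "1 - g i \<noteq> 0" by auto
    qed
    finally have e: "exp (sum (\<lambda>i. Ln (1 - g i)) (F N \<inter> ?Sm)) = (\<Prod>i\<in>F N \<inter> ?Sm. (1 - g i))" .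
    have "(\<Prod>i\<in>F N. 1 - g i) = (\<Prod>i\<in>?B \<union> (F N \<inter> ?Sm). 1 - g i)"
      by (rule arg_cong[where f="\<lambda>A. \<Prod>i\<in>A. 1 - g i"], rule eq)
    also have "\<dots> = (\<Prod>i\<in>?B. 1 - g i) * (\<Prod>i\<in>F N \<inter> ?Sm. 1 - g i)"
      by (rule prod.union_disjoint) (use fB fin in \<open>auto simp: bigS_def smallS_def\<close>)
    finally show ?case using e by simp
  qed
  with lim2 show ?thesis by (rule Lim_transform_eventually)
qed



lemma uprodZ_Un:
  assumes sA: "(\<lambda>i. norm (g i)) summable_on A" and sB: "(\<lambda>i. norm (g i)) summable_on B"
    and d: "A \<inter> B = {}"
  shows "uprodZ g (A \<union> B) = uprodZ g A * uprodZ g B"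
proof -
  have b: "bigS g (A \<union> B) = bigS g A \<union> bigS g B" by (auto simp: bigS_def)
  have s: "smallS g (A \<union> B) = smallS g A \<union> smallS g B" by (auto simp: smallS_def)
  have p: "(\<Prod>i\<in>bigS g (A \<union> B). 1 - g i) = (\<Prod>i\<in>bigS g A. 1 - g i) * (\<Prod>i\<in>bigS g B. 1 - g i)"
    unfolding b by (rule prod.union_disjoint) (use finite_bigS[OF sA] finite_bigS[OF sB] d in \<open>auto simp: bigS_def\<close>)
  have i: "(\<Sum>\<^sub>\<infinity>i\<in>smallS g (A \<union> B). Ln (1 - g i)) = (\<Sum>\<^sub>\<infinity>i\<in>smallS g A. Ln (1 - g i)) + (\<Sum>\<^sub>\<infinity>i\<in>smallS g B. Ln (1 - g i))"
    unfolding s by (rule infsum_Un_disjoint)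
      (use Infinite_Sum.abs_summable_summable[OF Ln_summable[OF sA]] Infinite_Sum.abs_summable_summable[OF Ln_summable[OF sB]] d
        in \<open>auto simp: smallS_def\<close>)
  show ?thesis unfolding uprodZ_def p i exp_add by (simp add: mult_ac)
qed

lemma uprodZ_reindex:
  assumes "inj_on h A"
  shows "uprodZ (g \<circ> h) A = uprodZ g (h ` A)"
proof -
  have b: "bigS g (h ` A) = h ` bigS (g \<circ> h) A" by (auto simp: bigS_def)
  have s: "smallS g (h ` A) = h ` smallS (g \<circ> h) A" by (auto simp: smallS_def)
  have ib: "inj_on h (bigS (g \<circ> h) A)" by (rule inj_on_subset[OF assms]) (auto simp: bigS_def)
  have is': "inj_on h (smallS (g \<circ> h) A)" by (rule inj_on_subset[OF assms]) (auto simp: smallS_def)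
  show ?thesis unfolding uprodZ_def b s prod.reindex[OF ib] infsum_reindex[OF is'] by (simp add: o_def)
qed

lemma geo_partial_le:
  fixes r :: real assumes "0 \<le> r" "r < 1"
  shows "(\<Sum>i<N. r ^ i) \<le> 1 / (1 - r)"
  using assms by (simp add: sum_gp_strict divide_right_mono)

lemma geo2_summable:
  fixes p q y :: complex
  assumes "norm p < 1" "norm q < 1"
  shows "(\<lambda>pr::nat\<times>nat. norm (y * p ^ fst pr * q ^ snd pr)) summable_on UNIV"
proof (rule nonneg_bdd_above_summable_on)
  show "bdd_above (sum (\<lambda>pr::nat\<times>nat. norm (y * p ^ fst pr * q ^ snd pr)) ` {F. F \<subseteq> UNIV \<and> finite F})"
  proof (rule bdd_aboveI2)
    fix F :: "(nat \<times> nat) set" assume "F \<in> {F. F \<subseteq> UNIV \<and> finite F}"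
    then have fF: "finite F" by simp
    obtain k1 where k1: "fst ` F \<subseteq> {..<k1}" using finite_nat_bounded[of "fst ` F"] fF by blast
    obtain k2 where k2: "snd ` F \<subseteq> {..<k2}" using finite_nat_bounded[of "snd ` F"] fF by blast
    define N where "N = max k1 k2"
    have sub: "F \<subseteq> {..<N} \<times> {..<N}" using k1 k2 unfolding N_def by force
    have "(\<Sum>pr\<in>F. norm (y * p ^ fst pr * q ^ snd pr)) \<le> (\<Sum>pr\<in>{..<N} \<times> {..<N}. norm (y * p ^ fst pr * q ^ snd pr))"
      by (rule sum_mono2) (use sub in auto)
    also have "\<dots> = (\<Sum>j<N. \<Sum>k<N. norm y * (norm p ^ j * norm q ^ k))"
      by (simp add: sum.cartesian_product norm_mult norm_power mult_ac case_prod_beta)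
    also have "\<dots> = norm y * ((\<Sum>j<N. norm p ^ j) * (\<Sum>k<N. norm q ^ k))"
      by (subst sum_product) (simp add: sum_distrib_left)
    also have "\<dots> \<le> norm y * (1 / (1 - norm p) * (1 / (1 - norm q)))"
      by (intro mult_left_mono mult_mono geo_partial_le sum_nonneg) (use assms in auto)
    finally show "(\<Sum>pr\<in>F. norm (y * p ^ fst pr * q ^ snd pr)) \<le> norm y * (1 / (1 - norm p) * (1 / (1 - norm q)))" .
  qed
qed auto

lemma base_uprodZ:
  assumes "norm p < 1" "norm q < 1"
  shows "qpoch_base y p q = uprodZ (\<lambda>pr::nat\<times>nat. y * p ^ fst pr * q ^ snd pr) UNIV"
  unfolding qpoch_base_def
proof (rule limI, rule uprodZ_lim[OF geo2_summable[OF assms]])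
  fix X :: "(nat\<times>nat) set" assume fX: "finite X"
  obtain k1 where k1: "fst ` X \<subseteq> {..<k1}" using finite_nat_bounded[of "fst ` X"] fX by blast
  obtain k2 where k2: "snd ` X \<subseteq> {..<k2}" using finite_nat_bounded[of "snd ` X"] fX by blast
  show "eventually (\<lambda>N. X \<subseteq> {..<N} \<times> {..<N}) sequentially"
  proof (rule eventually_sequentiallyI[of "max k1 k2"])
    fix N assume "max k1 k2 \<le> N" then show "X \<subseteq> {..<N} \<times> {..<N}" using k1 k2 by force
  qed
qed auto



definition Tf :: "complex \<Rightarrow> complex \<Rightarrow> complex \<Rightarrow> int \<times> int \<Rightarrow> complex" where
  "Tf x a b mn = x * a powi fst mn * b powi snd mn"

lemma base_region:
  fixes h :: "nat \<times> nat \<Rightarrow> int \<times> int"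
  assumes a: "a \<noteq> 0" and b: "b \<noteq> 0" and np: "norm p < 1" and nq: "norm q < 1"
    and y: "y = x * a powi m0 * b powi l0" and p: "p = a powi m1 * b powi l1"
    and q: "q = a powi m2 * b powi l2"
    and hdef: "h = (\<lambda>pr. (m0 + int (fst pr) * m1 + int (snd pr) * m2, l0 + int (fst pr) * l1 + int (snd pr) * l2))"
    and inj: "inj h"
  shows "qpoch_base y p q = uprodZ (Tf x a b) (range h) \<and> (\<lambda>i. norm (Tf x a b i)) summable_on range h"
proof -
  have g: "(\<lambda>pr::nat\<times>nat. y * p ^ fst pr * q ^ snd pr) = Tf x a b \<circ> h"
  proof
    fix pr :: "nat \<times> nat"
    obtain j k where pr: "pr = (j, k)" by force
    have "y * p ^ j * q ^ k = x * a powi m0 * b powi l0 * (a powi m1 * b powi l1) powi int j * (a powi m2 * b powi l2) powi int k"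
      by (simp add: y p q power_int_of_nat)
    also have "\<dots> = x * a powi (m0 + int j * m1 + int k * m2) * b powi (l0 + int j * l1 + int k * l2)"
      using a b by (simp add: power_int_add power_int_mult_distrib power_int_mult power_mult_distrib mult_ac)
    finally show "y * p ^ fst pr * q ^ snd pr = (Tf x a b \<circ> h) pr"
      by (simp add: pr hdef Tf_def)
  qed
  have "qpoch_base y p q = uprodZ (Tf x a b \<circ> h) UNIV"
    using base_uprodZ[OF np nq, of y] g by simp
  also have "\<dots> = uprodZ (Tf x a b) (range h)"
    by (rule uprodZ_reindex) (use inj in simp)
  finally have 1: "qpoch_base y p q = uprodZ (Tf x a b) (range h)" .
  have "(\<lambda>i. norm (Tf x a b i)) \<circ> h = (\<lambda>pr::nat\<times>nat. norm (y * p ^ fst pr * q ^ snd pr))"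
    using g by (simp add: o_def fun_eq_iff)
  then have "((\<lambda>i. norm (Tf x a b i)) \<circ> h) summable_on UNIV"
    using geo2_summable[OF np nq, of y] by simp
  then have "(\<lambda>i. norm (Tf x a b i)) summable_on range h"
    by (subst summable_on_reindex) (use inj in auto)
  with 1 show ?thesis by simp
qed



definition hmap :: "int \<Rightarrow> int \<Rightarrow> int \<Rightarrow> int \<Rightarrow> int \<Rightarrow> int \<Rightarrow> nat \<times> nat \<Rightarrow> int \<times> int" where
  "hmap m0 l0 m1 l1 m2 l2 = (\<lambda>pr. (m0 + int (fst pr) * m1 + int (snd pr) * m2, l0 + int (fst pr) * l1 + int (snd pr) * l2))"

lemma hmap_iff:
  "(m, l) \<in> range (hmap m0 l0 m1 l1 m2 l2) \<longleftrightarrow>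
     (\<exists>j k::int. 0 \<le> j \<and> 0 \<le> k \<and> m = m0 + j * m1 + k * m2 \<and> l = l0 + j * l1 + k * l2)"
proof
  assume "(m, l) \<in> range (hmap m0 l0 m1 l1 m2 l2)"
  then obtain j k :: nat where "(m, l) = hmap m0 l0 m1 l1 m2 l2 (j, k)" by auto
  then show "\<exists>j k::int. 0 \<le> j \<and> 0 \<le> k \<and> m = m0 + j * m1 + k * m2 \<and> l = l0 + j * l1 + k * l2"
    by (intro exI[of _ "int j"] exI[of _ "int k"]) (auto simp: hmap_def)
next
  assume "\<exists>j k::int. 0 \<le> j \<and> 0 \<le> k \<and> m = m0 + j * m1 + k * m2 \<and> l = l0 + j * l1 + k * l2"
  then obtain j k :: int where "j \<ge> 0" "k \<ge> 0" "m = m0 + j * m1 + k * m2" "l = l0 + j * l1 + k * l2" by blast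
  then show "(m, l) \<in> range (hmap m0 l0 m1 l1 m2 l2)"
    by (intro image_eqI[of _ _ "(nat j, nat k)"]) (auto simp: hmap_def)
qed

lemma hmap_Un:
  assumes "\<forall>m l::int. (\<exists>j k::int. 0 \<le> j \<and> 0 \<le> k \<and> m = a0 + j * a1 + k * a2 \<and> l = b0 + j * b1 + k * b2) \<longleftrightarrow>
     (\<exists>j k::int. 0 \<le> j \<and> 0 \<le> k \<and> m = c0 + j * c1 + k * c2 \<and> l = d0 + j * d1 + k * d2) \<or>
     (\<exists>j k::int. 0 \<le> j \<and> 0 \<le> k \<and> m = e0 + j * e1 + k * e2 \<and> l = f0 + j * f1 + k * f2)"
  shows "range (hmap a0 b0 a1 b1 a2 b2) = range (hmap c0 d0 c1 d1 c2 d2) \<union> range (hmap e0 f0 e1 f1 e2 f2)"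
proof (rule set_eqI)
  fix mn :: "int \<times> int"
  obtain m l where mn: "mn = (m, l)" by force
  show "mn \<in> range (hmap a0 b0 a1 b1 a2 b2) \<longleftrightarrow> mn \<in> range (hmap c0 d0 c1 d1 c2 d2) \<union> range (hmap e0 f0 e1 f1 e2 f2)"
    unfolding mn Un_iff hmap_iff by (rule assms[rule_format])
qed

lemma hmap_disj:
  assumes "\<forall>m l::int. \<not> ((\<exists>j k::int. 0 \<le> j \<and> 0 \<le> k \<and> m = c0 + j * c1 + k * c2 \<and> l = d0 + j * d1 + k * d2) \<and>
     (\<exists>j k::int. 0 \<le> j \<and> 0 \<le> k \<and> m = e0 + j * e1 + k * e2 \<and> l = f0 + j * f1 + k * f2))"
  shows "range (hmap c0 d0 c1 d1 c2 d2) \<inter> range (hmap e0 f0 e1 f1 e2 f2) = {}"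
proof (rule equals0I)
  fix mn :: "int \<times> int"
  assume A: "mn \<in> range (hmap c0 d0 c1 d1 c2 d2) \<inter> range (hmap e0 f0 e1 f1 e2 f2)"
  obtain m l where "mn = (m, l)" by force
  with A assms show False by (simp only: Int_iff hmap_iff)
qed

lemma base_reg:
  assumes "a \<noteq> 0" "b \<noteq> 0" "norm p < 1" "norm q < 1"
    "y = x * a powi m0 * b powi l0" "p = a powi m1 * b powi l1" "q = a powi m2 * b powi l2"
    "inj (hmap m0 l0 m1 l1 m2 l2)"
  shows "qpoch_base y p q = uprodZ (Tf x a b) (range (hmap m0 l0 m1 l1 m2 l2)) \<and>
    (\<lambda>i. norm (Tf x a b i)) summable_on range (hmap m0 l0 m1 l1 m2 l2)"
  by (rule base_region[OF assms(1-7) hmap_def assms(8)])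

lemma split3:
  assumes "B1 = uprodZ T R1 \<and> (\<lambda>i. norm (T i)) summable_on R1"
    "B2 = uprodZ T R2 \<and> (\<lambda>i. norm (T i)) summable_on R2"
    "B3 = uprodZ T R3 \<and> (\<lambda>i. norm (T i)) summable_on R3"
    "R1 = R2 \<union> R3" "R2 \<inter> R3 = {}"
  shows "B1 = B2 * B3"
  using assms uprodZ_Un[of T R2 R3] by simp

lemma caseA:
  assumes a: "a \<noteq> 0" and b: "b \<noteq> 0" and ba: "norm b < norm a" and a1: "norm a < 1"
  shows "qpoch_base x a (b/a) = qpoch_base x a b * qpoch_base (x/(a/b)) (1/(a/b)) b"
proof (rule split3)
  have nb: "norm b < 1" using ba a1 by simp
  have nba: "norm (b/a) < 1" using ba a by (simp add: norm_divide)
  have nab: "norm (1/(a/b)) < 1" using ba a b by (simp add: norm_divide)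
  show "qpoch_base x a (b/a) = uprodZ (Tf x a b) (range (hmap 0 0 1 0 (-1) 1)) \<and> (\<lambda>i. norm (Tf x a b i)) summable_on range (hmap 0 0 1 0 (-1) 1)"
    by (rule base_reg[OF a b a1 nba]) (auto simp: inj_def hmap_def power_int_minus field_simps)
  show "qpoch_base x a b = uprodZ (Tf x a b) (range (hmap 0 0 1 0 0 1)) \<and> (\<lambda>i. norm (Tf x a b i)) summable_on range (hmap 0 0 1 0 0 1)"
    by (rule base_reg[OF a b a1 nb]) (auto simp: inj_def hmap_def)
  show "qpoch_base (x/(a/b)) (1/(a/b)) b = uprodZ (Tf x a b) (range (hmap (-1) 1 (-1) 1 0 1)) \<and> (\<lambda>i. norm (Tf x a b i)) summable_on range (hmap (-1) 1 (-1) 1 0 1)"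
    by (rule base_reg[OF a b nab nb]) (auto simp: inj_def hmap_def power_int_minus field_simps)
  show "range (hmap 0 0 1 0 (-1) 1) = range (hmap 0 0 1 0 0 1) \<union> range (hmap (-1) 1 (-1) 1 0 1)"
    by (rule hmap_Un) presburger
  show "range (hmap 0 0 1 0 0 1) \<inter> range (hmap (-1) 1 (-1) 1 0 1) = {}"
    by (rule hmap_disj) presburger
qed

lemma caseB:
  assumes a: "a \<noteq> 0" and b: "b \<noteq> 0" and c1: "norm a < norm b" and c2: "norm b < 1"
  shows "qpoch_base x (a/b) b = qpoch_base x a b * qpoch_base (x/(b/a)) a (1/(b/a))"
proof (rule split3)
  have al: "a \<noteq> 0" using a b by simp
  have be: "b \<noteq> 0" using a b by simp
  have n0p: "norm (a/b) < 1" using a b c1 c2 by (simp add: norm_divide norm_mult field_simps)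
  have n0q: "norm (b) < 1" using a b c1 c2 by (simp add: norm_divide norm_mult field_simps)
  show "qpoch_base x (a/b) b = uprodZ (Tf x (a) (b)) (range (hmap 0 0 1 (-1) 0 1)) \<and> (\<lambda>i. norm (Tf x (a) (b) i)) summable_on range (hmap 0 0 1 (-1) 0 1)"
    by (rule base_reg[OF al be n0p n0q]) (use a b in \<open>auto simp: inj_def hmap_def power_int_minus field_simps\<close>)
  have n1p: "norm (a) < 1" using a b c1 c2 by (simp add: norm_divide norm_mult field_simps)
  have n1q: "norm (b) < 1" using a b c1 c2 by (simp add: norm_divide norm_mult field_simps)
  show "qpoch_base x a b = uprodZ (Tf x (a) (b)) (range (hmap 0 0 1 0 0 1)) \<and> (\<lambda>i. norm (Tf x (a) (b) i)) summable_on range (hmap 0 0 1 0 0 1)"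
    by (rule base_reg[OF al be n1p n1q]) (use a b in \<open>auto simp: inj_def hmap_def power_int_minus field_simps\<close>)
  have n2p: "norm (a) < 1" using a b c1 c2 by (simp add: norm_divide norm_mult field_simps)
  have n2q: "norm (1/(b/a)) < 1" using a b c1 c2 by (simp add: norm_divide norm_mult field_simps)
  show "qpoch_base (x/(b/a)) a (1/(b/a)) = uprodZ (Tf x (a) (b)) (range (hmap 1 (-1) 1 0 1 (-1))) \<and> (\<lambda>i. norm (Tf x (a) (b) i)) summable_on range (hmap 1 (-1) 1 0 1 (-1))"
    by (rule base_reg[OF al be n2p n2q]) (use a b in \<open>auto simp: inj_def hmap_def power_int_minus field_simps\<close>)
  show "range (hmap 0 0 1 (-1) 0 1) = range (hmap 0 0 1 0 0 1) \<union> range (hmap 1 (-1) 1 0 1 (-1))"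
    by (rule hmap_Un) presburger
  show "range (hmap 0 0 1 0 0 1) \<inter> range (hmap 1 (-1) 1 0 1 (-1)) = {}"
    by (rule hmap_disj) presburger
qed

lemma caseC:
  assumes a: "a \<noteq> 0" and b: "b \<noteq> 0" and c1: "norm a < 1" and c2: "1 < norm b"
  shows "qpoch_base (x/b) a (1/b) = qpoch_base (x/(b/a)) a (1/(b/a)) * qpoch_base (x/b) (a/b) (1/b)"
proof (rule split3)
  have al: "a \<noteq> 0" using a b by simp
  have be: "1/b \<noteq> 0" using a b by simp
  have n0p: "norm (a) < 1" using a b c1 c2 by (simp add: norm_divide norm_mult field_simps)
  have n0q: "norm (1/b) < 1" using a b c1 c2 by (simp add: norm_divide norm_mult field_simps)
  show "qpoch_base (x/b) a (1/b) = uprodZ (Tf x (a) (1/b)) (range (hmap 0 1 1 0 0 1)) \<and> (\<lambda>i. norm (Tf x (a) (1/b) i)) summable_on range (hmap 0 1 1 0 0 1)"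
    by (rule base_reg[OF al be n0p n0q]) (use a b in \<open>auto simp: inj_def hmap_def power_int_minus field_simps\<close>)
  have n1p: "norm (a) < 1" using a b c1 c2 by (simp add: norm_divide norm_mult field_simps)
  have n1q: "norm (1/(b/a)) < 1" using a b c1 c2 by (simp add: norm_divide norm_mult field_simps)
  show "qpoch_base (x/(b/a)) a (1/(b/a)) = uprodZ (Tf x (a) (1/b)) (range (hmap 1 1 1 0 1 1)) \<and> (\<lambda>i. norm (Tf x (a) (1/b) i)) summable_on range (hmap 1 1 1 0 1 1)"
    by (rule base_reg[OF al be n1p n1q]) (use a b in \<open>auto simp: inj_def hmap_def power_int_minus field_simps\<close>)
  have n2p: "norm (a/b) < 1" using a b c1 c2 by (simp add: norm_divide norm_mult field_simps)
  have n2q: "norm (1/b) < 1" using a b c1 c2 by (simp add: norm_divide norm_mult field_simps)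
  show "qpoch_base (x/b) (a/b) (1/b) = uprodZ (Tf x (a) (1/b)) (range (hmap 0 1 1 1 0 1)) \<and> (\<lambda>i. norm (Tf x (a) (1/b) i)) summable_on range (hmap 0 1 1 1 0 1)"
    by (rule base_reg[OF al be n2p n2q]) (use a b in \<open>auto simp: inj_def hmap_def power_int_minus field_simps\<close>)
  show "range (hmap 0 1 1 0 0 1) = range (hmap 1 1 1 0 1 1) \<union> range (hmap 0 1 1 1 0 1)"
    by (rule hmap_Un) presburger
  show "range (hmap 1 1 1 0 1 1) \<inter> range (hmap 0 1 1 1 0 1) = {}"
    by (rule hmap_disj) presburger
qed

lemma caseD:
  assumes a: "a \<noteq> 0" and b: "b \<noteq> 0" and c1: "norm b < 1" and c2: "1 < norm a"
  shows "qpoch_base (x/a) (1/a) b = qpoch_base (x/a) (1/a) (b/a) * qpoch_base (x/(a/b)) (1/(a/b)) b"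
proof (rule split3)
  have al: "1/a \<noteq> 0" using a b by simp
  have be: "b \<noteq> 0" using a b by simp
  have n0p: "norm (1/a) < 1" using a b c1 c2 by (simp add: norm_divide norm_mult field_simps)
  have n0q: "norm (b) < 1" using a b c1 c2 by (simp add: norm_divide norm_mult field_simps)
  show "qpoch_base (x/a) (1/a) b = uprodZ (Tf x (1/a) (b)) (range (hmap 1 0 1 0 0 1)) \<and> (\<lambda>i. norm (Tf x (1/a) (b) i)) summable_on range (hmap 1 0 1 0 0 1)"
    by (rule base_reg[OF al be n0p n0q]) (use a b in \<open>auto simp: inj_def hmap_def power_int_minus field_simps\<close>)
  have n1p: "norm (1/a) < 1" using a b c1 c2 by (simp add: norm_divide norm_mult field_simps)
  have n1q: "norm (b/a) < 1" using a b c1 c2 by (simp add: norm_divide norm_mult field_simps)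
  show "qpoch_base (x/a) (1/a) (b/a) = uprodZ (Tf x (1/a) (b)) (range (hmap 1 0 1 0 1 1)) \<and> (\<lambda>i. norm (Tf x (1/a) (b) i)) summable_on range (hmap 1 0 1 0 1 1)"
    by (rule base_reg[OF al be n1p n1q]) (use a b in \<open>auto simp: inj_def hmap_def power_int_minus field_simps\<close>)
  have n2p: "norm (1/(a/b)) < 1" using a b c1 c2 by (simp add: norm_divide norm_mult field_simps)
  have n2q: "norm (b) < 1" using a b c1 c2 by (simp add: norm_divide norm_mult field_simps)
  show "qpoch_base (x/(a/b)) (1/(a/b)) b = uprodZ (Tf x (1/a) (b)) (range (hmap 1 1 1 1 0 1)) \<and> (\<lambda>i. norm (Tf x (1/a) (b) i)) summable_on range (hmap 1 1 1 1 0 1)"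
    by (rule base_reg[OF al be n2p n2q]) (use a b in \<open>auto simp: inj_def hmap_def power_int_minus field_simps\<close>)
  show "range (hmap 1 0 1 0 0 1) = range (hmap 1 0 1 0 1 1) \<union> range (hmap 1 1 1 1 0 1)"
    by (rule hmap_Un) presburger
  show "range (hmap 1 0 1 0 1 1) \<inter> range (hmap 1 1 1 1 0 1) = {}"
    by (rule hmap_disj) presburger
qed

lemma caseE:
  assumes a: "a \<noteq> 0" and b: "b \<noteq> 0" and c1: "1 < norm a" and c2: "norm a < norm b"
  shows "qpoch_base (x/(a*(b/a))) (1/a) (1/(b/a)) = qpoch_base (x/(a*b)) (1/a) (1/b) * qpoch_base (x/b) (a/b) (1/b)"
proof (rule split3)
  have al: "1/a \<noteq> 0" using a b by simp
  have be: "1/b \<noteq> 0" using a b by simp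
  have n0p: "norm (1/a) < 1" using a b c1 c2 by (simp add: norm_divide norm_mult field_simps)
  have n0q: "norm (1/(b/a)) < 1" using a b c1 c2 by (simp add: norm_divide norm_mult field_simps)
  show "qpoch_base (x/(a*(b/a))) (1/a) (1/(b/a)) = uprodZ (Tf x (1/a) (1/b)) (range (hmap 0 1 1 0 (-1) 1)) \<and> (\<lambda>i. norm (Tf x (1/a) (1/b) i)) summable_on range (hmap 0 1 1 0 (-1) 1)"
    by (rule base_reg[OF al be n0p n0q]) (use a b in \<open>auto simp: inj_def hmap_def power_int_minus field_simps\<close>)
  have n1p: "norm (1/a) < 1" using a b c1 c2 by (simp add: norm_divide norm_mult field_simps)
  have n1q: "norm (1/b) < 1" using a b c1 c2 by (simp add: norm_divide norm_mult field_simps)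
  show "qpoch_base (x/(a*b)) (1/a) (1/b) = uprodZ (Tf x (1/a) (1/b)) (range (hmap 1 1 1 0 0 1)) \<and> (\<lambda>i. norm (Tf x (1/a) (1/b) i)) summable_on range (hmap 1 1 1 0 0 1)"
    by (rule base_reg[OF al be n1p n1q]) (use a b in \<open>auto simp: inj_def hmap_def power_int_minus field_simps\<close>)
  have n2p: "norm (a/b) < 1" using a b c1 c2 by (simp add: norm_divide norm_mult field_simps)
  have n2q: "norm (1/b) < 1" using a b c1 c2 by (simp add: norm_divide norm_mult field_simps)
  show "qpoch_base (x/b) (a/b) (1/b) = uprodZ (Tf x (1/a) (1/b)) (range (hmap 0 1 (-1) 1 0 1)) \<and> (\<lambda>i. norm (Tf x (1/a) (1/b) i)) summable_on range (hmap 0 1 (-1) 1 0 1)"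
    by (rule base_reg[OF al be n2p n2q]) (use a b in \<open>auto simp: inj_def hmap_def power_int_minus field_simps\<close>)
  show "range (hmap 0 1 1 0 (-1) 1) = range (hmap 1 1 1 0 0 1) \<union> range (hmap 0 1 (-1) 1 0 1)"
    by (rule hmap_Un) presburger
  show "range (hmap 1 1 1 0 0 1) \<inter> range (hmap 0 1 (-1) 1 0 1) = {}"
    by (rule hmap_disj) presburger
qed

lemma caseF:
  assumes a: "a \<noteq> 0" and b: "b \<noteq> 0" and c1: "1 < norm b" and c2: "norm b < norm a"
  shows "qpoch_base (x/((a/b)*b)) (1/(a/b)) (1/b) = qpoch_base (x/(a*b)) (1/a) (1/b) * qpoch_base (x/a) (1/a) (b/a)"
proof (rule split3)
  have al: "1/a \<noteq> 0" using a b by simp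
  have be: "1/b \<noteq> 0" using a b by simp
  have n0p: "norm (1/(a/b)) < 1" using a b c1 c2 by (simp add: norm_divide norm_mult field_simps)
  have n0q: "norm (1/b) < 1" using a b c1 c2 by (simp add: norm_divide norm_mult field_simps)
  show "qpoch_base (x/((a/b)*b)) (1/(a/b)) (1/b) = uprodZ (Tf x (1/a) (1/b)) (range (hmap 1 0 1 (-1) 0 1)) \<and> (\<lambda>i. norm (Tf x (1/a) (1/b) i)) summable_on range (hmap 1 0 1 (-1) 0 1)"
    by (rule base_reg[OF al be n0p n0q]) (use a b in \<open>auto simp: inj_def hmap_def power_int_minus field_simps\<close>)
  have n1p: "norm (1/a) < 1" using a b c1 c2 by (simp add: norm_divide norm_mult field_simps)
  have n1q: "norm (1/b) < 1" using a b c1 c2 by (simp add: norm_divide norm_mult field_simps)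
  show "qpoch_base (x/(a*b)) (1/a) (1/b) = uprodZ (Tf x (1/a) (1/b)) (range (hmap 1 1 1 0 0 1)) \<and> (\<lambda>i. norm (Tf x (1/a) (1/b) i)) summable_on range (hmap 1 1 1 0 0 1)"
    by (rule base_reg[OF al be n1p n1q]) (use a b in \<open>auto simp: inj_def hmap_def power_int_minus field_simps\<close>)
  have n2p: "norm (1/a) < 1" using a b c1 c2 by (simp add: norm_divide norm_mult field_simps)
  have n2q: "norm (b/a) < 1" using a b c1 c2 by (simp add: norm_divide norm_mult field_simps)
  show "qpoch_base (x/a) (1/a) (b/a) = uprodZ (Tf x (1/a) (1/b)) (range (hmap 1 0 1 0 1 (-1))) \<and> (\<lambda>i. norm (Tf x (1/a) (1/b) i)) summable_on range (hmap 1 0 1 0 1 (-1))"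
    by (rule base_reg[OF al be n2p n2q]) (use a b in \<open>auto simp: inj_def hmap_def power_int_minus field_simps\<close>)
  show "range (hmap 1 0 1 (-1) 0 1) = range (hmap 1 1 1 0 0 1) \<union> range (hmap 1 0 1 0 1 (-1))"
    by (rule hmap_Un) presburger
  show "range (hmap 1 1 1 0 0 1) \<inter> range (hmap 1 0 1 0 1 (-1)) = {}"
    by (rule hmap_disj) presburger
qed



lemma twoA:
  assumes a: "a \<noteq> 0" and b: "b \<noteq> 0" and c1: "norm b < norm a" and c2: "norm a < 1"
    and f1: "qpoch_finite x a (b/a)" and f2: "qpoch_finite x (a/b) b"
  shows "qpoch x a (b/a) * qpoch x (a/b) b = qpoch x a b \<and> qpoch_finite x a b"
proof -
  have m0: "norm a < 1" using a b c1 c2 by (simp add: norm_divide field_simps)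
  have m1: "norm (b/a) < 1" using a b c1 c2 by (simp add: norm_divide field_simps)
  have m2: "norm (a/b) > 1" using a b c1 c2 by (simp add: norm_divide field_simps)
  have m3: "norm b < 1" using a b c1 c2 by (simp add: norm_divide field_simps)
  have e1: "qpoch x a (b/a) = qpoch_base x a (b/a)" using m0 m1 m2 m3 unfolding qpoch_def by simp
  have e2: "qpoch x (a/b) b = inverse (qpoch_base (x/(a/b)) (1/(a/b)) b)" using m0 m1 m2 m3 unfolding qpoch_def by simp
  have e3: "qpoch x a b = qpoch_base x a b" using m0 m1 m2 m3 unfolding qpoch_def by simp
  note fin1 = f1[unfolded qpoch_finite_def] and fin2 = f2[unfolded qpoch_finite_def]
  note id = caseA[OF a b c1 c2, of x]
  show ?thesis
    using fin1 fin2 m0 m1 m2 m3 id unfolding e1 e2 e3 qpoch_finite_def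
    by (auto simp: field_simps)
qed

lemma twoB:
  assumes a: "a \<noteq> 0" and b: "b \<noteq> 0" and c1: "norm a < norm b" and c2: "norm b < 1"
    and f1: "qpoch_finite x a (b/a)" and f2: "qpoch_finite x (a/b) b"
  shows "qpoch x a (b/a) * qpoch x (a/b) b = qpoch x a b \<and> qpoch_finite x a b"
proof -
  have m0: "norm a < 1" using a b c1 c2 by (simp add: norm_divide field_simps)
  have m1: "norm (b/a) > 1" using a b c1 c2 by (simp add: norm_divide field_simps)
  have m2: "norm (a/b) < 1" using a b c1 c2 by (simp add: norm_divide field_simps)
  have m3: "norm b < 1" using a b c1 c2 by (simp add: norm_divide field_simps)
  have e1: "qpoch x a (b/a) = inverse (qpoch_base (x/(b/a)) a (1/(b/a)))" using m0 m1 m2 m3 unfolding qpoch_def by simp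
  have e2: "qpoch x (a/b) b = qpoch_base x (a/b) b" using m0 m1 m2 m3 unfolding qpoch_def by simp
  have e3: "qpoch x a b = qpoch_base x a b" using m0 m1 m2 m3 unfolding qpoch_def by simp
  note fin1 = f1[unfolded qpoch_finite_def] and fin2 = f2[unfolded qpoch_finite_def]
  note id = caseB[OF a b c1 c2, of x]
  show ?thesis
    using fin1 fin2 m0 m1 m2 m3 id unfolding e1 e2 e3 qpoch_finite_def
    by (auto simp: field_simps)
qed

lemma twoC:
  assumes a: "a \<noteq> 0" and b: "b \<noteq> 0" and c1: "norm a < 1" and c2: "1 < norm b"
    and f1: "qpoch_finite x a (b/a)" and f2: "qpoch_finite x (a/b) b"
  shows "qpoch x a (b/a) * qpoch x (a/b) b = qpoch x a b \<and> qpoch_finite x a b"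
proof -
  have m0: "norm a < 1" using a b c1 c2 by (simp add: norm_divide field_simps)
  have m1: "norm (b/a) > 1" using a b c1 c2 by (simp add: norm_divide field_simps)
  have m2: "norm (a/b) < 1" using a b c1 c2 by (simp add: norm_divide field_simps)
  have m3: "norm b > 1" using a b c1 c2 by (simp add: norm_divide field_simps)
  have e1: "qpoch x a (b/a) = inverse (qpoch_base (x/(b/a)) a (1/(b/a)))" using m0 m1 m2 m3 unfolding qpoch_def by simp
  have e2: "qpoch x (a/b) b = inverse (qpoch_base (x/b) (a/b) (1/b))" using m0 m1 m2 m3 unfolding qpoch_def by simp
  have e3: "qpoch x a b = inverse (qpoch_base (x/b) a (1/b))" using m0 m1 m2 m3 unfolding qpoch_def by simp
  note fin1 = f1[unfolded qpoch_finite_def] and fin2 = f2[unfolded qpoch_finite_def]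
  note id = caseC[OF a b c1 c2, of x]
  show ?thesis
    using fin1 fin2 m0 m1 m2 m3 id unfolding e1 e2 e3 qpoch_finite_def
    by (auto simp: field_simps)
qed

lemma twoD:
  assumes a: "a \<noteq> 0" and b: "b \<noteq> 0" and c1: "norm b < 1" and c2: "1 < norm a"
    and f1: "qpoch_finite x a (b/a)" and f2: "qpoch_finite x (a/b) b"
  shows "qpoch x a (b/a) * qpoch x (a/b) b = qpoch x a b \<and> qpoch_finite x a b"
proof -
  have m0: "norm a > 1" using a b c1 c2 by (simp add: norm_divide field_simps)
  have m1: "norm (b/a) < 1" using a b c1 c2 by (simp add: norm_divide field_simps)
  have m2: "norm (a/b) > 1" using a b c1 c2 by (simp add: norm_divide field_simps)
  have m3: "norm b < 1" using a b c1 c2 by (simp add: norm_divide field_simps)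
  have e1: "qpoch x a (b/a) = inverse (qpoch_base (x/a) (1/a) (b/a))" using m0 m1 m2 m3 unfolding qpoch_def by simp
  have e2: "qpoch x (a/b) b = inverse (qpoch_base (x/(a/b)) (1/(a/b)) b)" using m0 m1 m2 m3 unfolding qpoch_def by simp
  have e3: "qpoch x a b = inverse (qpoch_base (x/a) (1/a) b)" using m0 m1 m2 m3 unfolding qpoch_def by simp
  note fin1 = f1[unfolded qpoch_finite_def] and fin2 = f2[unfolded qpoch_finite_def]
  note id = caseD[OF a b c1 c2, of x]
  show ?thesis
    using fin1 fin2 m0 m1 m2 m3 id unfolding e1 e2 e3 qpoch_finite_def
    by (auto simp: field_simps)
qed

lemma twoE:
  assumes a: "a \<noteq> 0" and b: "b \<noteq> 0" and c1: "1 < norm a" and c2: "norm a < norm b"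
    and f1: "qpoch_finite x a (b/a)" and f2: "qpoch_finite x (a/b) b"
  shows "qpoch x a (b/a) * qpoch x (a/b) b = qpoch x a b \<and> qpoch_finite x a b"
proof -
  have m0: "norm a > 1" using a b c1 c2 by (simp add: norm_divide field_simps)
  have m1: "norm (b/a) > 1" using a b c1 c2 by (simp add: norm_divide field_simps)
  have m2: "norm (a/b) < 1" using a b c1 c2 by (simp add: norm_divide field_simps)
  have m3: "norm b > 1" using a b c1 c2 by (simp add: norm_divide field_simps)
  have e1: "qpoch x a (b/a) = qpoch_base (x/(a*(b/a))) (1/a) (1/(b/a))" using m0 m1 m2 m3 unfolding qpoch_def by simp
  have e2: "qpoch x (a/b) b = inverse (qpoch_base (x/b) (a/b) (1/b))" using m0 m1 m2 m3 unfolding qpoch_def by simp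
  have e3: "qpoch x a b = qpoch_base (x/(a*b)) (1/a) (1/b)" using m0 m1 m2 m3 unfolding qpoch_def by simp
  note fin1 = f1[unfolded qpoch_finite_def] and fin2 = f2[unfolded qpoch_finite_def]
  note id = caseE[OF a b c1 c2, of x]
  show ?thesis
    using fin1 fin2 m0 m1 m2 m3 id unfolding e1 e2 e3 qpoch_finite_def
    by (auto simp: field_simps)
qed

lemma twoF:
  assumes a: "a \<noteq> 0" and b: "b \<noteq> 0" and c1: "1 < norm b" and c2: "norm b < norm a"
    and f1: "qpoch_finite x a (b/a)" and f2: "qpoch_finite x (a/b) b"
  shows "qpoch x a (b/a) * qpoch x (a/b) b = qpoch x a b \<and> qpoch_finite x a b"
proof -
  have m0: "norm a > 1" using a b c1 c2 by (simp add: norm_divide field_simps)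
  have m1: "norm (b/a) < 1" using a b c1 c2 by (simp add: norm_divide field_simps)
  have m2: "norm (a/b) > 1" using a b c1 c2 by (simp add: norm_divide field_simps)
  have m3: "norm b > 1" using a b c1 c2 by (simp add: norm_divide field_simps)
  have e1: "qpoch x a (b/a) = inverse (qpoch_base (x/a) (1/a) (b/a))" using m0 m1 m2 m3 unfolding qpoch_def by simp
  have e2: "qpoch x (a/b) b = qpoch_base (x/((a/b)*b)) (1/(a/b)) (1/b)" using m0 m1 m2 m3 unfolding qpoch_def by simp
  have e3: "qpoch x a b = qpoch_base (x/(a*b)) (1/a) (1/b)" using m0 m1 m2 m3 unfolding qpoch_def by simp
  note fin1 = f1[unfolded qpoch_finite_def] and fin2 = f2[unfolded qpoch_finite_def]
  note id = caseF[OF a b c1 c2, of x]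
  show ?thesis
    using fin1 fin2 m0 m1 m2 m3 id unfolding e1 e2 e3 qpoch_finite_def
    by (auto simp: field_simps)
qed



lemma two:
  assumes a: "a \<noteq> 0" and b: "b \<noteq> 0" and na: "norm a \<noteq> 1" and nb: "norm b \<noteq> 1"
    and nab: "norm a \<noteq> norm b"
    and f1: "qpoch_finite x a (b/a)" and f2: "qpoch_finite x (a/b) b"
  shows "qpoch x a (b/a) * qpoch x (a/b) b = qpoch x a b \<and> qpoch_finite x a b"
proof (cases "norm a < 1")
  case T1: True
  show ?thesis
  proof (cases "norm b < 1")
    case T2: True
    show ?thesis
    proof (cases "norm a < norm b")
      case True
      then show ?thesis using twoB[OF a b True T2 f1 f2] by blast
    next
      case False
      then have "norm b < norm a" using nab by linarith
      then show ?thesis using twoA[OF a b _ T1 f1 f2] by blast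
    qed
  next
    case False
    then have "1 < norm b" using nb by linarith
    then show ?thesis using twoC[OF a b T1 _ f1 f2] by blast
  qed
next
  case F1: False
  then have A1: "1 < norm a" using na by linarith
  show ?thesis
  proof (cases "norm b < 1")
    case True
    then show ?thesis using twoD[OF a b True A1 f1 f2] by blast
  next
    case False
    then have B1: "1 < norm b" using nb by linarith
    show ?thesis
    proof (cases "norm a < norm b")
      case True
      then show ?thesis using twoE[OF a b A1 True f1 f2] by blast
    next
      case False
      then have "norm b < norm a" using nab by linarith
      then show ?thesis using twoF[OF a b B1 _ f1 f2] by blast
    qed
  qed
qed

lemma e2pi_add: "e2pi (c + d) = e2pi c * e2pi d"
  by (simp add: e2pi_def distrib_left exp_add)

lemma e2pi_nz: "e2pi c \<noteq> 0"
  by (simp add: e2pi_def)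

lemma e2pi_minus: "e2pi (- c) = 1 / e2pi c"
  by (simp add: e2pi_def exp_minus[symmetric] divide_inverse)

lemma norm_e2pi: "norm (e2pi c) = exp (- 2 * pi * Im c)"
  by (simp add: e2pi_def norm_exp_eq_Re)

lemma norm_e2pi_1: "c \<notin> \<real> \<Longrightarrow> norm (e2pi c) \<noteq> 1"
  by (simp add: norm_e2pi complex_is_Real_iff)

lemma twoU:
  assumes A: "A \<notin> \<real>" and C: "C \<notin> \<real>" and AC: "A + C \<notin> \<real>"
    and f1: "qpoch_finite x (e2pi A) (e2pi (- (A + C)))"
    and f2: "qpoch_finite x (e2pi (A + C)) (e2pi (- C))"
  shows "qpoch x (e2pi A) (e2pi (- (A + C))) * qpoch x (e2pi (A + C)) (e2pi (- C)) = qpoch x (e2pi A) (e2pi (- C))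
     \<and> qpoch_finite x (e2pi A) (e2pi (- C))"
proof -
  let ?a = "e2pi A" and ?b = "e2pi (- C)"
  have q1: "e2pi (- (A + C)) = ?b / ?a"
    unfolding e2pi_minus[of "A+C"] e2pi_minus[of C] e2pi_add by (simp add: field_simps e2pi_nz)
  have q2: "e2pi (A + C) = ?a / ?b"
    unfolding e2pi_minus[of C] e2pi_add by (simp add: field_simps e2pi_nz)
  have nab: "norm ?a \<noteq> norm ?b"
  proof -
    have "Im A + Im C \<noteq> 0" using AC by (simp add: complex_is_Real_iff)
    then have "- (pi * Im A) \<noteq> pi * Im C"
      by (metis add.inverse_inverse distrib_left minus_mult_right mult_eq_0_iff pi_neq_zero add_eq_0_iff)
    then show ?thesis by (simp add: norm_e2pi)
  qed
  have nb: "norm ?b \<noteq> 1" using C by (intro norm_e2pi_1) (simp add: complex_is_Real_iff)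
  show ?thesis
    using two[OF e2pi_nz e2pi_nz norm_e2pi_1[OF A] nb nab f1[unfolded q1] f2[unfolded q2]]
    unfolding q1 q2 .
qed

lemma prod_merge:
  fixes f :: "nat \<Rightarrow> complex"
  assumes "j < n"
  shows "(\<Prod>k\<le>n. f k) = (\<Prod>k<n. (if k < j then f k else if k = j then f j * f (Suc j) else f (Suc k)))"
  using assms
proof (induction n)
  case 0 then show ?case by simp
next
  case (Suc m)
  show ?case
  proof (cases "j < m")
    case True
    have "(\<Prod>k\<le>Suc m. f k) = (\<Prod>k\<le>m. f k) * f (Suc m)" by simp
    also have "\<dots> = (\<Prod>k<m. (if k < j then f k else if k = j then f j * f (Suc j) else f (Suc k))) * f (Suc m)"
      using Suc.IH[OF True] by simp
    finally show ?thesis using True by simp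
  next
    case False
    then have jm: "j = m" using Suc.prems by simp
    have "(\<Prod>k\<le>Suc m. f k) = (\<Prod>k<m. f k) * f m * f (Suc m)"
      by (simp add: lessThan_Suc_atMost[symmetric])
    also have "(\<Prod>k<m. f k) = (\<Prod>k<m. (if k < j then f k else if k = j then f j * f (Suc j) else f (Suc k)))"
      using jm by (intro prod.cong) auto
    finally show ?thesis using jm by (simp add: mult.assoc)
  qed
qed



lemma plucker:
  assumes "icross a b = 1" "icross b c = 1"
  shows "fst a + fst c = icross a c * fst b \<and> snd a + snd c = icross a c * snd b"
  using assms unfolding icross_def by algebra

lemma find_i:
  assumes n1: "1 \<le> n"
    and cr: "\<And>i. i \<le> n \<Longrightarrow> icross (u i) (u (Suc i)) = 1"
    and vw: "icross (u 0) (u (Suc n)) = 1"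
    and pos: "\<And>i. 1 \<le> i \<Longrightarrow> i \<le> n \<Longrightarrow> icross (u i) (u (Suc n)) > 0 \<and> icross (u 0) (u i) > 0"
  shows "\<exists>i. 1 \<le> i \<and> i \<le> n \<and> icross (u (i - 1)) (u (Suc i)) = 1"
proof -
  define h where "h k = icross (u k) (u (Suc n)) + icross (u 0) (u k)" for k
  have self: "icross x x = 0" for x by (simp add: icross_def)
  have h0: "h 0 = 1" using vw by (simp add: h_def self)
  have hS: "h (Suc n) = 1" using vw by (simp add: h_def self)
  have hin: "h k \<ge> 2" if "1 \<le> k" "k \<le> n" for k using pos[OF that] by (simp add: h_def)
  have hge: "h k \<ge> 1" if "k \<le> Suc n" for k
  proof (cases "k = 0")
    case True then show ?thesis using h0 by simp
  next
    case False
    show ?thesis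
    proof (cases "k = Suc n")
      case True then show ?thesis using hS by simp
    next
      case False
      then show ?thesis using hin[of k] \<open>k \<noteq> 0\<close> that by simp
    qed
  qed
  have key: "icross (u (i - 1)) (u (Suc i)) * h i = h (i - 1) + h (Suc i)" if "1 \<le> i" "i \<le> n" for i
  proof -
    have c1: "icross (u (i - 1)) (u i) = 1" using cr[of "i - 1"] that by simp
    have c2: "icross (u i) (u (Suc i)) = 1" using cr[of i] that by simp
    from plucker[OF c1 c2] show ?thesis unfolding h_def icross_def by algebra
  qed
  define M where "M = Max (h ` {..Suc n})"
  have Mge: "h k \<le> M" if "k \<le> Suc n" for k unfolding M_def using that by (intro Max_ge) auto
  have "M \<in> h ` {..Suc n}" unfolding M_def by (intro Max_in) auto
  then obtain k0 where k0: "k0 \<le> Suc n" "h k0 = M" by auto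
  define i where "i = (LEAST k. k \<le> Suc n \<and> h k = M)"
  have iP: "i \<le> Suc n \<and> h i = M" unfolding i_def by (rule LeastI[of _ k0]) (use k0 in auto)
  have iL: "h k \<noteq> M" if "k < i" for k
  proof
    assume "h k = M"
    then have "i \<le> k" unfolding i_def using that iP by (intro Least_le) auto
    with that show False by simp
  qed
  have M2: "M \<ge> 2" using Mge[of 1] hin[of 1] n1 by simp
  have i0: "i \<noteq> 0"
  proof
    assume "i = 0" with iP h0 M2 show False by simp
  qed
  have iS: "i \<noteq> Suc n"
  proof
    assume "i = Suc n" with iP hS M2 show False by simp
  qed
  have i1: "1 \<le> i" "i \<le> n" using i0 iS iP by auto
  have lt: "h (i - 1) < M" using iL[of "i - 1"] Mge[of "i - 1"] i1 by fastforce
  have le: "h (Suc i) \<le> M" using Mge[of "Suc i"] i1 by simp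
  have g1: "h (i - 1) \<ge> 1" "h (Suc i) \<ge> 1" using hge i1 by auto
  define c where "c = icross (u (i - 1)) (u (Suc i))"
  have cM: "c * M = h (i - 1) + h (Suc i)" using key[OF i1] iP by (simp add: c_def)
  have "c * M < 2 * M" using cM lt le by simp
  then have "c < 2" using M2 by (simp add: mult_less_cancel_right)
  moreover have "c * M > 0" using cM g1 by simp
  then have "c > 0" using M2 by (simp add: zero_less_mult_iff)
  ultimately have "c = 1" by simp
  then show ?thesis using i1 unfolding c_def by blast
qed



definition Qf where "Qf x \<omega> a b = qpoch x (e2pi (ccross \<omega> a)) (e2pi (- ccross \<omega> b))"
definition QF where "QF x \<omega> a b = qpoch_finite x (e2pi (ccross \<omega> a)) (e2pi (- ccross \<omega> b))"

lemma core:
  assumes "\<And>i. i \<le> n \<Longrightarrow> icross (u i) (u (Suc i)) = 1"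
    and "icross (u 0) (u (Suc n)) = 1"
    and "\<And>i. 1 \<le> i \<Longrightarrow> i \<le> n \<Longrightarrow> icross (u i) (u (Suc n)) > 0 \<and> icross (u 0) (u i) > 0"
    and "\<And>i. i \<le> Suc n \<Longrightarrow> ccross \<omega> (u i) \<notin> \<real>"
    and "\<And>i. i \<le> n \<Longrightarrow> QF x \<omega> (u i) (u (Suc i))"
  shows "(\<Prod>i\<le>n. Qf x \<omega> (u i) (u (Suc i))) = Qf x \<omega> (u 0) (u (Suc n))"
  using assms
proof (induction n arbitrary: u)
  case 0
  then show ?case by simp
next
  case (Suc m)
  note cr = Suc.prems(1) and vw = Suc.prems(2) and pos = Suc.prems(3) and nr = Suc.prems(4) and fin = Suc.prems(5)
  obtain i where i1: "1 \<le> i" and i2: "i \<le> Suc m" and ic: "icross (u (i - 1)) (u (Suc i)) = 1"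
    using find_i[of "Suc m" u] cr vw pos by auto
  have c1: "icross (u (i - 1)) (u i) = 1" using cr[of "i - 1"] i1 i2 by simp
  have c2: "icross (u i) (u (Suc i)) = 1" using cr[of i] i2 by simp
  have pl: "fst (u (i - 1)) + fst (u (Suc i)) = fst (u i) \<and> snd (u (i - 1)) + snd (u (Suc i)) = snd (u i)"
    using plucker[OF c1 c2] ic by simp
  define A where "A = ccross \<omega> (u (i - 1))"
  define C where "C = ccross \<omega> (u (Suc i))"
  have lin: "ccross \<omega> (u i) = A + C"
    unfolding A_def C_def ccross_def using pl
    by (metis (no_types, lifting) add_diff_add distrib_left of_int_add)
  have comb: "Qf x \<omega> (u (i - 1)) (u i) * Qf x \<omega> (u i) (u (Suc i)) = Qf x \<omega> (u (i - 1)) (u (Suc i))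
      \<and> QF x \<omega> (u (i - 1)) (u (Suc i))"
  proof -
    have nA: "A \<notin> \<real>" unfolding A_def using nr[of "i - 1"] i2 by simp
    have nC: "C \<notin> \<real>" unfolding C_def using nr[of "Suc i"] i2 by simp
    have nAC: "A + C \<notin> \<real>" using nr[of i] i2 lin by simp
    have f1: "qpoch_finite x (e2pi A) (e2pi (- (A + C)))"
      using fin[of "i - 1"] i1 i2 lin unfolding QF_def A_def by simp
    have f2: "qpoch_finite x (e2pi (A + C)) (e2pi (- C))"
      using fin[of i] i2 lin unfolding QF_def C_def by simp
    show ?thesis using twoU[OF nA nC nAC f1 f2] lin unfolding Qf_def QF_def A_def C_def
      using i1 by simp
  qed
  define u' where "u' k = (if k < i then u k else u (Suc k))" for k
  define f where "f k = Qf x \<omega> (u k) (u (Suc k))" for k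
  have jlt: "i - 1 < Suc m" using i1 i2 by simp
  have "(\<Prod>k\<le>Suc m. Qf x \<omega> (u k) (u (Suc k))) = (\<Prod>k\<le>Suc m. f k)" by (simp add: f_def)
  also have "\<dots> = (\<Prod>k<Suc m. (if k < i - 1 then f k else if k = i - 1 then f (i - 1) * f (Suc (i - 1)) else f (Suc k)))"
    by (rule prod_merge[OF jlt])
  also have "\<dots> = (\<Prod>k<Suc m. Qf x \<omega> (u' k) (u' (Suc k)))"
  proof (rule prod.cong[OF refl])
    fix k assume "k \<in> {..<Suc m}"
    show "(if k < i - 1 then f k else if k = i - 1 then f (i - 1) * f (Suc (i - 1)) else f (Suc k)) = Qf x \<omega> (u' k) (u' (Suc k))"
      using comb i1 by (auto simp: f_def u'_def)
  qed
  also have "\<dots> = (\<Prod>k\<le>m. Qf x \<omega> (u' k) (u' (Suc k)))" by (simp add: lessThan_Suc_atMost)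
  also have "\<dots> = Qf x \<omega> (u' 0) (u' (Suc m))"
  proof (rule Suc.IH)
    fix k assume k: "k \<le> m"
    show "icross (u' k) (u' (Suc k)) = 1"
    proof (cases "Suc k = i")
      case True
      then have "k = i - 1" by simp
      then show ?thesis using ic True by (simp add: u'_def)
    next
      case False
      then show ?thesis using cr[of k] cr[of "Suc k"] k by (auto simp: u'_def)
    qed
    show "QF x \<omega> (u' k) (u' (Suc k))"
    proof (cases "Suc k = i")
      case True
      then have "k = i - 1" by simp
      then show ?thesis using comb True by (simp add: u'_def)
    next
      case False
      then show ?thesis using fin[of k] fin[of "Suc k"] k by (auto simp: u'_def)
    qed
  next
    show "icross (u' 0) (u' (Suc m)) = 1" using vw i1 i2 by (simp add: u'_def)
  next
    fix k assume k: "1 \<le> k" "k \<le> m"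
    show "0 < icross (u' k) (u' (Suc m)) \<and> 0 < icross (u' 0) (u' k)"
      using pos[of k] pos[of "Suc k"] k i1 i2 by (auto simp: u'_def)
  next
    fix k assume k: "k \<le> Suc m"
    show "ccross \<omega> (u' k) \<notin> \<real>" using nr[of k] nr[of "Suc k"] k by (auto simp: u'_def)
  qed
  also have "\<dots> = Qf x \<omega> (u 0) (u (Suc (Suc m)))" using i1 i2 by (simp add: u'_def)
  finally show ?case .
qed

theorem proposition5p9:
  fixes v w :: "int \<times> int" and u :: "nat \<Rightarrow> int \<times> int" and n :: nat
    and z :: complex and \<omega> :: "complex \<times> complex"
  assumes "primitive v" and "primitive w" and "icross v w = 1"
    and "\<And>i. 1 \<le> i \<Longrightarrow> i \<le> n \<Longrightarrow> primitive (u i)"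
    and "\<And>i. 1 \<le> i \<Longrightarrow> i \<le> n \<Longrightarrow>
           \<exists>a b :: real. a > 0 \<and> b > 0 \<and>
             real_of_int (fst (u i)) = a * real_of_int (fst v) + b * real_of_int (fst w) \<and>
             real_of_int (snd (u i)) = a * real_of_int (snd v) + b * real_of_int (snd w)"
    and "u 0 = v" and "u (Suc n) = w"
    and "\<And>i. i \<le> n \<Longrightarrow> icross (u i) (u (Suc i)) = 1"
    and "\<And>i. i \<le> Suc n \<Longrightarrow> ccross \<omega> (u i) \<notin> \<real>"
    and "\<And>i. i \<le> n \<Longrightarrow>
           qpoch_finite (e2pi z) (e2pi (ccross \<omega> (u i))) (e2pi (- ccross \<omega> (u (Suc i))))"
  shows "(\<Prod>i\<le>n. qpoch (e2pi z) (e2pi (ccross \<omega> (u i))) (e2pi (- ccross \<omega> (u (Suc i)))))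
         = qpoch (e2pi z) (e2pi (ccross \<omega> v)) (e2pi (- ccross \<omega> w))"
  proof -
  note a = assms
  have cr: "\<And>i. i \<le> n \<Longrightarrow> icross (u i) (u (Suc i)) = 1" by (rule assms(8))
  have vw: "icross (u 0) (u (Suc n)) = 1" using assms(3,6,7) by simp
  have vw': "real_of_int (fst v) * real_of_int (snd w) - real_of_int (snd v) * real_of_int (fst w) = 1"
    using assms(3) unfolding icross_def by (metis of_int_1 of_int_diff of_int_mult)
  have pos: "icross (u i) (u (Suc n)) > 0 \<and> icross (u 0) (u i) > 0" if i: "1 \<le> i" "i \<le> n" for i
  proof -
    obtain a b :: real where ab: "a > 0" "b > 0"
      "real_of_int (fst (u i)) = a * real_of_int (fst v) + b * real_of_int (fst w)"
      "real_of_int (snd (u i)) = a * real_of_int (snd v) + b * real_of_int (snd w)"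
      using assms(5)[OF i] by blast
    have "real_of_int (icross (u i) w) = a * (real_of_int (fst v) * real_of_int (snd w) - real_of_int (snd v) * real_of_int (fst w))"
      unfolding icross_def of_int_diff of_int_mult ab(3,4) by (simp add: algebra_simps)
    then have 1: "real_of_int (icross (u i) w) = a" using vw' by simp
    have "real_of_int (icross v (u i)) = b * (real_of_int (fst v) * real_of_int (snd w) - real_of_int (snd v) * real_of_int (fst w))"
      unfolding icross_def of_int_diff of_int_mult ab(3,4) by (simp add: algebra_simps)
    then have 2: "real_of_int (icross v (u i)) = b" using vw' by simp
    show ?thesis using 1 2 ab(1,2) assms(6,7) by simp
  qed
  have "(\<Prod>i\<le>n. Qf (e2pi z) \<omega> (u i) (u (Suc i))) = Qf (e2pi z) \<omega> (u 0) (u (Suc n))"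
  proof (rule core)
    show "\<And>i. i \<le> n \<Longrightarrow> icross (u i) (u (Suc i)) = 1" by (rule cr)
    show "icross (u 0) (u (Suc n)) = 1" by (rule vw)
    show "\<And>i. 1 \<le> i \<Longrightarrow> i \<le> n \<Longrightarrow> icross (u i) (u (Suc n)) > 0 \<and> icross (u 0) (u i) > 0" by (rule pos)
    show "\<And>i. i \<le> Suc n \<Longrightarrow> ccross \<omega> (u i) \<notin> \<real>" by (rule assms(9))
    show "\<And>i. i \<le> n \<Longrightarrow> QF (e2pi z) \<omega> (u i) (u (Suc i))" unfolding QF_def by (rule assms(10))
  qed
  then show ?thesis unfolding Qf_def using assms(6,7) by simp
qed

end
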